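(* Let $G=(V,E)$ be a forest with $|V|=n$. For every integer $k\ge 0$ with $2k\le n$, the coefficient of $p_{(2^k,1^{n-2k})}$ in the expansion of $X_G$ in the power-sum basis equals $(-1)^k m_k$, where $m_k$ is the number of $k$-matchings of $G$. Consequently the matching polynomial of $G$ is $$\mu_G(x)=\sum_{k}\bigl|c_{(2^k,1^{n-2k})}\bigr|\,x^k,$$ where $c_\lambda$ denotes the coefficient of $p_\lambda$ in $X_G$; in particular $\mu_G$ is determined by $X_G$.
   Context: For a graph $G=(V,E)$ with $V=\{v_1,\dots,v_n\}$, a proper coloring is a map $\kappa:V\to\mathbb{N}$ with $\kappa(u)\ne\kappa(v)$ whenever $(u,v)\in E$. The chromatic symmetric function is $X_G=\sum_\kappa x_{\kappa(v_1)}\cdots x_{\kappa(v_n)}$, summed over proper colorings. $p_m=\sum_{i\ge1}x_i^m$ and $p_\lambda=p_{\lambda_1}\cdots p_{\lambda_\ell}$ for a partition $\lambda$; the $p_\lambda$ form a basis of symmetric functions. The notation $(2^k,1^{j})$ denotes the partition with $k$ parts equal to $2$ and $j$ parts equal to $1$. A $k$-matching of $G$ is a set of $k$ edges, no two sharing an endpoint; the matching polynomial is $\mu_G(x)=\sum_k m_k x^k$ with $m_k$ the number of $k$-matchings. *)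

theory Defs
  imports Main "HOL-Library.FuncSet" "HOL-Computational_Algebra.Polynomial"
begin

definition simple_graph :: "'a set \<Rightarrow> 'a set set \<Rightarrow> bool" where
  "simple_graph V E \<longleftrightarrow> finite V \<and>
     (\<forall>e\<in>E. \<exists>u v. e = {u, v} \<and> u \<noteq> v \<and> u \<in> V \<and> v \<in> V)"

definition has_cycle :: "'a set set \<Rightarrow> bool" where
  "has_cycle E \<longleftrightarrow> (\<exists>vs. 3 \<le> length vs \<and> distinct vs \<and>
     (\<forall>i < length vs. {vs ! i, vs ! ((i + 1) mod length vs)} \<in> E))"

definition forest :: "'a set \<Rightarrow> 'a set set \<Rightarrow> bool" where
  "forest V E \<longleftrightarrow> simple_graph V E \<and> \<not> has_cycle E"

definition proper_coloring :: "'a set \<Rightarrow> 'a set set \<Rightarrow> ('a \<Rightarrow> nat) \<Rightarrow> bool" where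
  "proper_coloring V E \<kappa> \<longleftrightarrow> (\<forall>u\<in>V. \<forall>v\<in>V. {u, v} \<in> E \<longrightarrow> \<kappa> u \<noteq> \<kappa> v)"

text \<open>Evaluation of the chromatic symmetric function X_G at a finitely supported point
  x = (x_0, x_1, ...) (colours are natural numbers). Only colourings into the support of x
  contribute, so the (formally infinite) sum reduces to this finite sum.\<close>
definition chrom_sym_eval :: "'a set \<Rightarrow> 'a set set \<Rightarrow> (nat \<Rightarrow> real) \<Rightarrow> real" where
  "chrom_sym_eval V E x =
     (\<Sum>\<kappa> \<in> {\<kappa> \<in> V \<rightarrow>\<^sub>E {i. x i \<noteq> 0}. proper_coloring V E \<kappa>}. \<Prod>v\<in>V. x (\<kappa> v))"

definition power_sum :: "nat \<Rightarrow> (nat \<Rightarrow> real) \<Rightarrow> real" where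
  "power_sum m x = (\<Sum>i \<in> {i. x i \<noteq> 0}. x i ^ m)"

definition power_sum_part :: "nat list \<Rightarrow> (nat \<Rightarrow> real) \<Rightarrow> real" where
  "power_sum_part lam x = (\<Prod>m \<leftarrow> lam. power_sum m x)"

definition partitions :: "nat \<Rightarrow> nat list set" where
  "partitions n = {lam. sorted_wrt (\<ge>) lam \<and> 0 \<notin> set lam \<and> sum_list lam = n}"

text \<open>c is the family of coefficients of X_G in the power-sum basis:
  X_G = sum over partitions lambda of n of c(lambda) p_lambda, as symmetric functions,
  i.e. the identity holds at every finitely supported point.\<close>
definition p_expansion :: "'a set \<Rightarrow> 'a set set \<Rightarrow> (nat list \<Rightarrow> real) \<Rightarrow> bool" where
  "p_expansion V E c \<longleftrightarrow> (\<forall>x. finite {i. x i \<noteq> 0} \<longrightarrow>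
     chrom_sym_eval V E x = (\<Sum>lam \<in> partitions (card V). c lam * power_sum_part lam x))"

definition two_one_part :: "nat \<Rightarrow> nat \<Rightarrow> nat list" where
  "two_one_part k n = replicate k 2 @ replicate (n - 2 * k) 1"

definition matchings :: "'a set set \<Rightarrow> nat \<Rightarrow> 'a set set set" where
  "matchings E k = {M. M \<subseteq> E \<and> card M = k \<and> pairwise disjnt M}"

definition matching_poly :: "'a set set \<Rightarrow> real poly" where
  "matching_poly E = (\<Sum>k \<le> card E. monom (real (card (matchings E k))) k)"

end

theory Submission
  imports Defs "HOL-Library.Multiset"
begin


lemma poly_vanish:
  fixes C :: "nat \<Rightarrow> real"
  assumes inf: "infinite Z" and z: "\<And>z. z \<in> Z \<Longrightarrow> (\<Sum>e\<le>n. C e * z ^ e) = 0"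
  shows "\<And>e. e \<le> n \<Longrightarrow> C e = 0"
proof -
  define p where "p = (\<Sum>e\<le>n. monom (C e) e)"
  have pv: "poly p z = (\<Sum>e\<le>n. C e * z ^ e)" for z
    by (simp add: p_def poly_sum poly_monom)
  have "p = 0"
  proof (rule ccontr)
    assume "p \<noteq> 0"
    then have "finite {x. poly p x = 0}" by (rule poly_roots_finite)
    moreover have "Z \<subseteq> {x. poly p x = 0}" using z pv by auto
    ultimately show False using inf finite_subset by blast
  qed
  fix e assume "e \<le> n"
  have "coeff p e = C e" using \<open>e \<le> n\<close>
    by (simp add: p_def coeff_sum coeff_monom)
  then show "C e = 0" using \<open>p = 0\<close> by simp
qed

lemma two_var:
  fixes D :: "nat \<Rightarrow> nat \<Rightarrow> real"
  assumes h: "\<And>A B::nat. (\<Sum>e\<le>n. \<Sum>q\<le>n. D e q * (real A + real B) ^ e * (real A - real B) ^ q) = 0"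
  shows "\<And>e q. e \<le> n \<Longrightarrow> q \<le> n \<Longrightarrow> D e q = 0"
proof -
  have step1: "(\<Sum>q\<le>n. D e q * real j ^ q) = 0" if "e \<le> n" for e j
  proof -
    let ?Z = "range (\<lambda>B::nat. 2 * real B + real j)"
    have "infinite ?Z"
    proof
      assume "finite ?Z"
      moreover have "inj (\<lambda>B::nat. 2 * real B + real j)" by (rule injI) simp
      ultimately show False using finite_imageD by blast
    qed
    moreover have "(\<Sum>e\<le>n. (\<Sum>q\<le>n. D e q * real j ^ q) * z ^ e) = 0" if "z \<in> ?Z" for z
    proof -
      from that obtain B where zB: "z = 2 * real B + real j" by auto
      have "0 = (\<Sum>e\<le>n. \<Sum>q\<le>n. D e q * (real (B + j) + real B) ^ e * (real (B + j) - real B) ^ q)"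
        using h[of "B + j" B] by simp
      also have "\<dots> = (\<Sum>e\<le>n. (\<Sum>q\<le>n. D e q * real j ^ q) * z ^ e)"
        by (simp add: zB sum_distrib_left mult_ac)
      finally show ?thesis by simp
    qed
    ultimately show ?thesis using poly_vanish[where Z="?Z" and n=n and C="\<lambda>e. \<Sum>q\<le>n. D e q * real j ^ q"] that
      by blast
  qed
  fix e q assume "e \<le> n" "q \<le> n"
  have "infinite (range (real :: nat \<Rightarrow> real))"
  proof
    assume "finite (range (real :: nat \<Rightarrow> real))"
    moreover have "inj (real :: nat \<Rightarrow> real)" by (rule injI) simp
    ultimately show False using finite_imageD by blast
  qed
  moreover have "(\<Sum>q\<le>n. D e q * z ^ q) = 0" if "z \<in> range (real :: nat \<Rightarrow> real)" for z
    using step1[OF \<open>e \<le> n\<close>] that by auto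
  ultimately show "D e q = 0" using poly_vanish[where Z="range (real :: nat \<Rightarrow> real)" and n=n and C="D e"] \<open>q \<le> n\<close>
    by blast
qed

definition evn :: "nat list \<Rightarrow> nat" where "evn l = length (filter even l)"
definition odn :: "nat list \<Rightarrow> nat" where "odn l = length (filter odd l)"

lemma sum_list_ge: "0 \<notin> set l \<Longrightarrow> 2 * evn l + odn l \<le> sum_list l"
  by (induction l) (auto simp: evn_def odn_def elim!: evenE oddE)

lemma sum_list_eq12: "0 \<notin> set l \<Longrightarrow> sum_list l = 2 * evn l + odn l \<Longrightarrow> set l \<subseteq> {1,2}"
proof (induction l)
  case Nil then show ?case by simp
next
  case (Cons a l)
  have ge: "2 * evn l + odn l \<le> sum_list l" using Cons.prems by (intro sum_list_ge) auto
  show ?case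
  proof (cases "even a")
    case True
    then have "a \<ge> 2" using Cons.prems by (auto elim!: evenE)
    have "sum_list (a # l) = a + sum_list l" by simp
    moreover have "evn (a#l) = Suc (evn l)" "odn (a#l) = odn l" using True by (auto simp: evn_def odn_def)
    ultimately have "a = 2 \<and> sum_list l = 2 * evn l + odn l" using Cons.prems(2) ge \<open>a \<ge> 2\<close> by linarith
    then show ?thesis using Cons by auto
  next
    case False
    then have "a \<ge> 1" by (cases a) auto
    have "evn (a#l) = evn l" "odn (a#l) = Suc (odn l)" using False by (auto simp: evn_def odn_def)
    then have "a = 1 \<and> sum_list l = 2 * evn l + odn l" using Cons.prems(2) ge \<open>a \<ge> 1\<close> by simp
    then show ?thesis using Cons by auto
  qed
qed

lemma sorted12: "sorted_wrt (\<ge>) l \<Longrightarrow> set l \<subseteq> {1,2::nat} \<Longrightarrow> l = replicate (evn l) 2 @ replicate (odn l) 1"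
proof (induction l)
  case Nil then show ?case by (simp add: evn_def odn_def)
next
  case (Cons a l)
  then have IH: "l = replicate (evn l) 2 @ replicate (odn l) 1" by auto
  show ?case
  proof (cases "a = 2")
    case True then show ?thesis using IH by (simp add: evn_def odn_def)
  next
    case False
    then have a1: "a = 1" using Cons.prems by auto
    then have "\<forall>x\<in>set l. x = 1" using Cons.prems by fastforce
    then have "filter even l = []" "filter odd l = l" by (auto simp: filter_empty_conv filter_id_conv)
    moreover have "l = replicate (length l) 1" using \<open>\<forall>x\<in>set l. x = 1\<close>
      by (simp add: replicate_length_same)
    ultimately show ?thesis using a1 by (simp add: evn_def odn_def)
  qed
qed

lemma sorted_rep: "sorted_wrt (\<ge>) (replicate k (a::nat))"
  by (induction k) auto

lemma two_one_props:
  assumes "2 * k \<le> n"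
  shows "two_one_part k n \<in> partitions n" "evn (two_one_part k n) = k" "odn (two_one_part k n) = n - 2 * k"
  using assms by (auto simp: two_one_part_def partitions_def evn_def odn_def sorted_wrt_append sum_list_replicate sorted_rep)

lemma unique_class:
  assumes "l \<in> partitions n" "2 * k \<le> n" "evn l = k" "odn l = n - 2 * k"
  shows "l = two_one_part k n"
proof -
  have "0 \<notin> set l" "sum_list l = n" "sorted_wrt (\<ge>) l" using assms(1) by (auto simp: partitions_def)
  then have "set l \<subseteq> {1,2}" using sum_list_eq12 assms by simp
  then show ?thesis using sorted12[OF \<open>sorted_wrt (\<ge>) l\<close>] assms by (simp add: two_one_part_def)
qed

lemma length_le_sum: "0 \<notin> set l \<Longrightarrow> length l \<le> sum_list (l::nat list)"
  by (induction l) (auto simp: Suc_le_eq)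

lemma finite_partitions: "finite (partitions n)"
proof -
  have "partitions n \<subseteq> {xs. set xs \<subseteq> {..n} \<and> length xs \<le> n}"
  proof
    fix l assume "l \<in> partitions n"
    then have "0 \<notin> set l" "sum_list l = n" by (auto simp: partitions_def)
    then show "l \<in> {xs. set xs \<subseteq> {..n} \<and> length xs \<le> n}"
      using length_le_sum[of l] member_le_sum_list[of _ l] by auto
  qed
  then show ?thesis using finite_lists_length_le[of "{..n}" n] finite_subset by blast
qed

lemma evn_odn_le: "l \<in> partitions n \<Longrightarrow> evn l \<le> n \<and> odn l \<le> n"
  using length_le_sum[of l] by (auto simp: partitions_def evn_def odn_def intro: le_trans[OF length_filter_le])



definition adj :: "'a set set \<Rightarrow> ('a \<times> 'a) set" where "adj S = {(a,b). {a,b} \<in> S}"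
definition rel :: "'a set \<Rightarrow> 'a set set \<Rightarrow> ('a \<times> 'a) set" where
  "rel V S = {(a,b). a \<in> V \<and> b \<in> V \<and> (a,b) \<in> (adj S)\<^sup>*}"
definition blocks :: "'a set \<Rightarrow> 'a set set \<Rightarrow> 'a set set" where "blocks V S = V // rel V S"
definition lam :: "'a set \<Rightarrow> 'a set set \<Rightarrow> nat list" where
  "lam V S = rev (sorted_list_of_multiset (image_mset card (mset_set (blocks V S))))"

lemma sym_adj: "sym (adj S)"
  by (auto simp: sym_def adj_def insert_commute)

lemma equiv_rel: "equiv V (rel V S)"
proof -
  have "sym ((adj S)\<^sup>*)" using sym_adj sym_rtrancl by blast
  then show ?thesis
    unfolding equiv_def refl_on_def sym_def trans_def rel_def
    by (auto intro: rtrancl_trans)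
qed

lemma K_equiv:
  fixes x :: "nat \<Rightarrow> real"
  assumes eq: "equiv V R" and fV: "finite V" and fC: "finite C"
  shows "(\<Sum>\<kappa>\<in>{\<kappa>\<in>PiE V (\<lambda>_. C). \<forall>(a,b)\<in>R. \<kappa> a = \<kappa> b}. \<Prod>v\<in>V. x (\<kappa> v))
       = (\<Prod>B\<in>V//R. \<Sum>c\<in>C. x c ^ card B)"
proof -
  have fQ: "finite (V//R)" using fV eq by (simp add: finite_quotient[OF fV] equiv_def)
  have RV: "R \<subseteq> V \<times> V" using eq by (auto simp: equiv_def refl_on_def)
  have cls: "R``{v} = B" if "B \<in> V//R" "v \<in> B" for B v
    using that eq by (metis quotientE equiv_class_eq_iff Image_singleton_iff equiv_class_eq)
  have some_in: "(SOME v. v \<in> B) \<in> B" if "B \<in> V//R" for B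
    using in_quotient_imp_non_empty[OF eq that] by (simp add: some_in_eq)
  have subV: "B \<subseteq> V" if "B \<in> V//R" for B using in_quotient_imp_subset[OF eq that] .
  have UD: "prod g V = (\<Prod>B\<in>V//R. prod g B)" for g :: "'a \<Rightarrow> real"
  proof -
    have "prod g (\<Union>(V//R)) = (prod \<circ> prod) g (V//R)"
    proof (rule prod.Union_disjoint)
      show "\<forall>A\<in>V // R. finite A" using subV fV by (auto intro: finite_subset)
      show "\<forall>A\<in>V // R. \<forall>B\<in>V // R. A \<noteq> B \<longrightarrow> A \<inter> B = {}"
        using quotient_disj[OF eq] by blast
    qed
    then show ?thesis using Union_quotient[OF eq] by simp
  qed
  have "(\<Prod>B\<in>V//R. \<Sum>c\<in>C. x c ^ card B) = (\<Sum>f\<in>PiE (V//R) (\<lambda>_. C). \<Prod>B\<in>V//R. x (f B) ^ card B)"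
    by (rule prod_sum_PiE) (use fQ fC in auto)
  also have "\<dots> = (\<Sum>\<kappa>\<in>{\<kappa>\<in>PiE V (\<lambda>_. C). \<forall>(a,b)\<in>R. \<kappa> a = \<kappa> b}. \<Prod>v\<in>V. x (\<kappa> v))"
  proof (rule sum.reindex_bij_witness[where i = "\<lambda>\<kappa>. \<lambda>B\<in>V//R. \<kappa> (SOME v. v \<in> B)"
        and j = "\<lambda>f. \<lambda>v\<in>V. f (R``{v})"])
    fix f assume f: "f \<in> PiE (V//R) (\<lambda>_. C)"
    show "(\<lambda>B\<in>V//R. (\<lambda>v\<in>V. f (R``{v})) (SOME v. v \<in> B)) = f"
    proof (rule ext)
      fix B show "(\<lambda>B\<in>V//R. (\<lambda>v\<in>V. f (R``{v})) (SOME v. v \<in> B)) B = f B"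
        using f some_in[of B] subV[of B] cls[of B "SOME v. v \<in> B"] by (auto simp: PiE_def extensional_def)
    qed
    show "(\<lambda>v\<in>V. f (R``{v})) \<in> {\<kappa>\<in>PiE V (\<lambda>_. C). \<forall>(a,b)\<in>R. \<kappa> a = \<kappa> b}"
      using f RV eq by (auto simp: quotientI equiv_class_eq)
    have "(\<Prod>v\<in>V. x ((\<lambda>v\<in>V. f (R``{v})) v)) = (\<Prod>B\<in>V//R. \<Prod>v\<in>B. x ((\<lambda>v\<in>V. f (R``{v})) v))"
      by (rule UD)
    also have "\<dots> = (\<Prod>B\<in>V//R. x (f B) ^ card B)"
    proof (rule prod.cong[OF refl])
      fix B assume B: "B \<in> V//R"
      have "(\<Prod>v\<in>B. x ((\<lambda>v\<in>V. f (R``{v})) v)) = (\<Prod>v\<in>B. x (f B))"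
        using B subV[OF B] cls[OF B] by (intro prod.cong) auto
      then show "(\<Prod>v\<in>B. x ((\<lambda>v\<in>V. f (R``{v})) v)) = x (f B) ^ card B" by simp
    qed
    finally show "(\<Prod>v\<in>V. x ((\<lambda>v\<in>V. f (R``{v})) v)) = (\<Prod>B\<in>V//R. x (f B) ^ card B)" .
  next
    fix \<kappa> assume k: "\<kappa> \<in> {\<kappa>\<in>PiE V (\<lambda>_. C). \<forall>(a,b)\<in>R. \<kappa> a = \<kappa> b}"
    show "(\<lambda>B\<in>V//R. \<kappa> (SOME v. v \<in> B)) \<in> PiE (V//R) (\<lambda>_. C)"
      using k some_in subV by (auto simp: PiE_def Pi_def)
    show "(\<lambda>v\<in>V. (\<lambda>B\<in>V//R. \<kappa> (SOME v. v \<in> B)) (R``{v})) = \<kappa>"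
    proof (rule ext)
      fix v show "(\<lambda>v\<in>V. (\<lambda>B\<in>V//R. \<kappa> (SOME v. v \<in> B)) (R``{v})) v = \<kappa> v"
      proof (cases "v \<in> V")
        case True
        then have Q: "R``{v} \<in> V//R" by (rule quotientI)
        have "(SOME w. w \<in> R``{v}) \<in> R``{v}" by (rule some_in[OF Q])
        then have "\<kappa> (SOME w. w \<in> R``{v}) = \<kappa> v" using k by auto
        then show ?thesis using True Q by simp
      next
        case False then show ?thesis using k by (auto simp: PiE_def extensional_def)
      qed
    qed
  qed
  finally show ?thesis by simp
qed



definition edges_in :: "'a set \<Rightarrow> 'a set set \<Rightarrow> bool" where
  "edges_in V S \<longleftrightarrow> (\<forall>e\<in>S. \<exists>u v. e = {u, v} \<and> u \<noteq> v \<and> u \<in> V \<and> v \<in> V)"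

definition const_on :: "('a \<Rightarrow> nat) \<Rightarrow> 'a set \<Rightarrow> bool" where
  "const_on \<kappa> e \<longleftrightarrow> (\<forall>a\<in>e. \<forall>b\<in>e. \<kappa> a = \<kappa> b)"

lemma const_iff:
  assumes "edges_in V S"
  shows "(\<forall>e\<in>S. const_on \<kappa> e) \<longleftrightarrow> (\<forall>(a,b)\<in>rel V S. \<kappa> a = \<kappa> b)"
proof
  assume h: "\<forall>e\<in>S. const_on \<kappa> e"
  show "\<forall>(a,b)\<in>rel V S. \<kappa> a = \<kappa> b"
  proof (clarify)
    fix a b assume "(a,b) \<in> rel V S"
    then have "(a,b) \<in> (adj S)\<^sup>*" by (simp add: rel_def)
    then show "\<kappa> a = \<kappa> b"
    proof (induction rule: rtrancl_induct)
      case base then show ?case by simp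
    next
      case (step y z)
      then have "{y,z} \<in> S" by (simp add: adj_def)
      then have "\<kappa> y = \<kappa> z" using h by (auto simp: const_on_def)
      then show ?case using step by simp
    qed
  qed
next
  assume h: "\<forall>(a,b)\<in>rel V S. \<kappa> a = \<kappa> b"
  show "\<forall>e\<in>S. const_on \<kappa> e"
  proof
    fix e assume "e \<in> S"
    then obtain u v where e: "e = {u,v}" "u \<in> V" "v \<in> V" using assms by (auto simp: edges_in_def)
    then have "(u,v) \<in> adj S" "(v,u) \<in> adj S" using \<open>e \<in> S\<close> by (auto simp: adj_def insert_commute)
    then have "(u,v) \<in> rel V S" using e by (auto simp: rel_def)
    then have "\<kappa> u = \<kappa> v" using h by auto
    then show "const_on \<kappa> e" using e by (auto simp: const_on_def)
  qed
qed

lemma KS: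
  assumes "finite V" "finite {i. x i \<noteq> 0}" "edges_in V S"
  shows "(\<Sum>\<kappa>\<in>{\<kappa>\<in>PiE V (\<lambda>_. {i. x i \<noteq> 0}). \<forall>e\<in>S. const_on \<kappa> e}. \<Prod>v\<in>V. x (\<kappa> v))
       = (\<Prod>B\<in>blocks V S. power_sum (card B) x)"
  using K_equiv[OF equiv_rel[of V S] assms(1,2), where x=x] const_iff[OF assms(3)]
  by (simp add: blocks_def power_sum_def)

lemma ppart_lam:
  assumes "finite V"
  shows "power_sum_part (lam V S) x = (\<Prod>B\<in>blocks V S. power_sum (card B) x)"
proof -
  have "power_sum_part (lam V S) x = prod_mset (mset (map (\<lambda>m. power_sum m x) (lam V S)))"
    by (metis power_sum_part_def prod_mset_prod_list)
  also have "\<dots> = prod_mset (image_mset (\<lambda>B. power_sum (card B) x) (mset_set (blocks V S)))"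
    by (simp add: lam_def multiset.map_comp comp_def)
  also have "\<dots> = (\<Prod>B\<in>blocks V S. power_sum (card B) x)"
    by (simp add: prod_unfold_prod_mset)
  finally show ?thesis .
qed

lemma finite_blocks: "finite V \<Longrightarrow> finite (blocks V S)"
  unfolding blocks_def by (rule finite_quotient[OF _ equiv_rel[THEN equiv_type]])

lemma block_props:
  assumes "finite V" "B \<in> blocks V S"
  shows "B \<subseteq> V" "B \<noteq> {}" "finite B" "card B > 0"
proof -
  show "B \<subseteq> V" using assms in_quotient_imp_subset[OF equiv_rel] by (auto simp: blocks_def)
  show "B \<noteq> {}" using assms in_quotient_imp_non_empty[OF equiv_rel] by (auto simp: blocks_def)
  show "finite B" using \<open>B \<subseteq> V\<close> assms finite_subset by blast
  then show "card B > 0" using \<open>B \<noteq> {}\<close> by auto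
qed

lemma sum_card_blocks:
  assumes "finite V"
  shows "(\<Sum>B\<in>blocks V S. card B) = card V"
proof -
  have "card (\<Union>(blocks V S)) = (\<Sum>B\<in>blocks V S. card B)"
  proof (rule card_Union_disjoint)
    show "pairwise disjnt (blocks V S)"
      unfolding pairwise_def disjnt_def blocks_def using quotient_disj[OF equiv_rel[of V S]] by blast
  qed (use block_props[OF assms] in auto)
  then show ?thesis using Union_quotient[OF equiv_rel[of V S]] by (simp add: blocks_def)
qed

lemma lam_part:
  assumes "finite V"
  shows "lam V S \<in> partitions (card V)"
proof -
  have s: "sorted_wrt (\<ge>) (lam V S)"
    by (simp add: lam_def sorted_wrt_rev)
  have z: "0 \<notin> set (lam V S)"
    using block_props[OF assms] finite_blocks[OF assms] by (auto simp: lam_def)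
  have "sum_list (lam V S) = sum_mset (mset (lam V S))" by (simp add: sum_mset_sum_list)
  also have "\<dots> = sum_mset (image_mset card (mset_set (blocks V S)))" by (simp add: lam_def)
  also have "\<dots> = card V" using sum_card_blocks[OF assms, of S] by (simp add: sum_unfold_sum_mset)
  finally show ?thesis using s z by (simp add: partitions_def)
qed

lemma prod_of_bool: "finite A \<Longrightarrow> (\<Prod>a\<in>A. of_bool (Q a) :: real) = of_bool (\<forall>a\<in>A. Q a)"
  by (induction A rule: finite_induct) auto

lemma proper_iff:
  assumes "edges_in V E"
  shows "proper_coloring V E \<kappa> \<longleftrightarrow> (\<forall>e\<in>E. \<not> const_on \<kappa> e)"
proof
  assume h: "proper_coloring V E \<kappa>"
  show "\<forall>e\<in>E. \<not> const_on \<kappa> e"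
  proof
    fix e assume "e \<in> E"
    then obtain u v where e: "e = {u,v}" "u \<in> V" "v \<in> V" using assms by (auto simp: edges_in_def)
    then have "\<kappa> u \<noteq> \<kappa> v" using h \<open>e \<in> E\<close> by (auto simp: proper_coloring_def)
    then show "\<not> const_on \<kappa> e" using e by (auto simp: const_on_def)
  qed
next
  assume h: "\<forall>e\<in>E. \<not> const_on \<kappa> e"
  show "proper_coloring V E \<kappa>"
    unfolding proper_coloring_def
  proof (intro ballI impI)
    fix u v assume "u \<in> V" "v \<in> V" "{u,v} \<in> E"
    then have "\<not> const_on \<kappa> {u,v}" using h by blast
    then show "\<kappa> u \<noteq> \<kappa> v" by (auto simp: const_on_def)
  qed
qed

lemma incl_excl:
  assumes fV: "finite V" and fE: "finite E" and eE: "edges_in V E" and fC: "finite {i. x i \<noteq> 0}"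
  shows "chrom_sym_eval V E x = (\<Sum>S\<in>Pow E. (-1) ^ card S *
     (\<Sum>\<kappa>\<in>{\<kappa>\<in>PiE V (\<lambda>_. {i. x i \<noteq> 0}). \<forall>e\<in>S. const_on \<kappa> e}. \<Prod>v\<in>V. x (\<kappa> v)))"
proof -
  let ?P = "PiE V (\<lambda>_. {i. x i \<noteq> 0})"
  have fP: "finite ?P" using fV fC by (simp add: finite_PiE)
  have fin: "finite X" if "X \<in> Pow E" for X using that fE finite_subset by blast
  have ob: "of_bool (proper_coloring V E \<kappa>) = (\<Sum>X\<in>Pow E. (-1) ^ card X * of_bool (\<forall>e\<in>X. const_on \<kappa> e) :: real)" for \<kappa>
  proof -
    have "of_bool (proper_coloring V E \<kappa>) = (\<Prod>e\<in>E. of_bool (\<not> const_on \<kappa> e) :: real)"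
      using proper_iff[OF eE] prod_of_bool[OF fE] by simp
    also have "\<dots> = (\<Prod>e\<in>E. - of_bool (const_on \<kappa> e) + 1)"
      by (intro prod.cong) auto
    also have "\<dots> = (\<Sum>X\<in>Pow E. (\<Prod>e\<in>X. - of_bool (const_on \<kappa> e)) * (\<Prod>e\<in>E - X. 1))"
      by (rule prod_add[OF fE])
    also have "\<dots> = (\<Sum>X\<in>Pow E. (-1) ^ card X * of_bool (\<forall>e\<in>X. const_on \<kappa> e))"
      by (intro sum.cong refl) (simp add: prod_uminus prod_of_bool fin)
    finally show ?thesis .
  qed
  have "chrom_sym_eval V E x = (\<Sum>\<kappa>\<in>?P. of_bool (proper_coloring V E \<kappa>) * (\<Prod>v\<in>V. x (\<kappa> v)))"
    unfolding chrom_sym_eval_def by (auto simp: sum.inter_filter[OF fP] intro!: sum.cong)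
  also have "\<dots> = (\<Sum>\<kappa>\<in>?P. \<Sum>X\<in>Pow E. (-1) ^ card X * (of_bool (\<forall>e\<in>X. const_on \<kappa> e) * (\<Prod>v\<in>V. x (\<kappa> v))))"
    by (simp add: ob sum_distrib_right mult.assoc)
  also have "\<dots> = (\<Sum>X\<in>Pow E. \<Sum>\<kappa>\<in>?P. (-1) ^ card X * (of_bool (\<forall>e\<in>X. const_on \<kappa> e) * (\<Prod>v\<in>V. x (\<kappa> v))))"
    by (rule sum.swap)
  also have "\<dots> = (\<Sum>X\<in>Pow E. (-1) ^ card X * (\<Sum>\<kappa>\<in>{\<kappa>\<in>?P. \<forall>e\<in>X. const_on \<kappa> e}. \<Prod>v\<in>V. x (\<kappa> v)))"
    by (auto simp: sum_distrib_left sum.inter_filter[OF fP] intro!: sum.cong)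
  finally show ?thesis .
qed



lemma cls_block:
  assumes "B \<in> blocks V S" "v \<in> B"
  shows "B = rel V S `` {v}"
proof -
  from assms(1) obtain a where a: "B = rel V S `` {a}" "a \<in> V" unfolding blocks_def by (rule quotientE)
  then have "(a, v) \<in> rel V S" using assms(2) by simp
  then show ?thesis using a equiv_class_eq[OF equiv_rel] by metis
qed

lemma in_rel_adj:
  assumes "edges_in V S" "{a,b} \<in> S"
  shows "(a,b) \<in> rel V S"
proof -
  obtain u v where "{a,b} = {u,v}" "u \<in> V" "v \<in> V" using assms by (auto simp: edges_in_def)
  then have "a \<in> V" "b \<in> V" by (auto simp: doubleton_eq_iff)
  then show ?thesis using assms(2) by (auto simp: rel_def adj_def)
qed

lemma edge_two:
  assumes "edges_in V S" "e \<in> S"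
  shows "card e = 2" "finite e"
  using assms by (auto simp: edges_in_def)

lemma G1:
  assumes eS: "edges_in V S" and fV: "finite V" and le2: "\<And>B. B \<in> blocks V S \<Longrightarrow> card B \<le> 2"
  shows "S = {B \<in> blocks V S. card B = 2}" "pairwise disjnt S"
proof -
  have F1: "e \<in> blocks V S \<and> card e = 2" if "e \<in> S" for e
  proof -
    obtain a b where e: "e = {a,b}" "a \<noteq> b" "a \<in> V" "b \<in> V" using eS \<open>e \<in> S\<close> by (auto simp: edges_in_def)
    let ?Q = "rel V S `` {a}"
    have Q: "?Q \<in> blocks V S" using e by (simp add: blocks_def quotientI)
    have "a \<in> ?Q" using equiv_class_self[OF equiv_rel e(3)] .
    moreover have "b \<in> ?Q" using in_rel_adj[OF eS] \<open>e \<in> S\<close> e by auto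
    ultimately have sub: "e \<subseteq> ?Q" using e by auto
    have "finite ?Q" using block_props[OF fV Q] by simp
    moreover have "card ?Q \<le> card e" using le2[OF Q] e by simp
    ultimately have eQ: "e = ?Q" using card_seteq sub by blast
    have ce: "card e = 2" using e(1,2) by simp
    show ?thesis using Q eQ ce by metis
  qed
  have F2: "B \<in> S" if "B \<in> blocks V S" "card B = 2" for B
  proof -
    obtain a b where ab: "B = {a,b}" "a \<noteq> b" using \<open>card B = 2\<close> by (auto simp: card_2_iff)
    have Ba: "B = rel V S `` {a}" using cls_block[OF that(1)] ab by simp
    then have "(a,b) \<in> rel V S" using ab by auto
    then have "(a,b) \<in> (adj S)\<^sup>*" by (simp add: rel_def)
    then show "B \<in> S"
    proof (cases rule: converse_rtranclE)
      case base then show ?thesis using ab by simp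
    next
      case (step w)
      then have aw: "{a,w} \<in> S" by (simp add: adj_def)
      then obtain u v where uv: "{a,w} = {u,v}" "u \<noteq> v" "u \<in> V" "v \<in> V" using eS by (auto simp: edges_in_def)
      then have "a \<noteq> w" by auto
      have "(a,w) \<in> rel V S" using in_rel_adj[OF eS aw] .
      then have "w \<in> B" using Ba by simp
      then have "w = b" using \<open>a \<noteq> w\<close> ab by auto
      then show ?thesis using aw ab by simp
    qed
  qed
  show "S = {B \<in> blocks V S. card B = 2}" using F1 F2 by blast
  show "pairwise disjnt S"
    unfolding pairwise_def disjnt_def
    using F1 quotient_disj[OF equiv_rel[of V S]] by (auto simp: blocks_def)
qed

lemma G2:
  assumes eS: "edges_in V S" and fV: "finite V" and pd: "pairwise disjnt S" and B: "B \<in> blocks V S"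
  shows "card B \<le> 2"
proof -
  obtain v where v: "B = rel V S `` {v}" "v \<in> V" using B unfolding blocks_def by (rule quotientE)
  have fB: "finite B" using block_props[OF fV B] by simp
  show ?thesis
  proof (cases "\<exists>e\<in>S. v \<in> e")
    case True
    then obtain e where e: "e \<in> S" "v \<in> e" by blast
    have "w \<in> e" if "w \<in> B" for w
    proof -
      from that v have "(v,w) \<in> (adj S)\<^sup>*" by (simp add: rel_def)
      then show "w \<in> e"
      proof (induction rule: rtrancl_induct)
        case base then show ?case using e by simp
      next
        case (step y z)
        then have yz: "{y,z} \<in> S" by (simp add: adj_def)
        have "{y,z} = e"
        proof (rule ccontr)
          assume "{y,z} \<noteq> e"
          then have "disjnt {y,z} e" using pd yz e(1) by (metis pairwiseD)
          then show False using step by (auto simp: disjnt_def)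
        qed
        then show ?case by auto
      qed
    qed
    then have "B \<subseteq> e" by blast
    then have "card B \<le> card e" using edge_two[OF eS e(1)] card_mono by metis
    then show ?thesis using edge_two[OF eS e(1)] by simp
  next
    case False
    have "w = v" if "w \<in> B" for w
    proof -
      from that v have "(v,w) \<in> (adj S)\<^sup>*" by (simp add: rel_def)
      then show "w = v"
      proof (cases rule: converse_rtranclE)
        case base then show ?thesis by simp
      next
        case (step y)
        then have "{v,y} \<in> S" by (simp add: adj_def)
        then show ?thesis using False by auto
      qed
    qed
    then have "B \<subseteq> {v}" by blast
    then have "card B \<le> 1" using card_mono[of "{v}" B] by simp
    then show ?thesis by simp
  qed
qed

lemma sum_split_filter:
  "finite A \<Longrightarrow> sum f A = sum f {a\<in>A. Q a} + sum f {a\<in>A. \<not> Q a}"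
  by (subst sum.union_disjoint[symmetric]) (auto intro: sum.cong)

lemma match_iff:
  assumes eS: "edges_in V S" and fV: "finite V" and SE: "S \<subseteq> E" and k: "2 * k \<le> card V"
  shows "(card {B\<in>blocks V S. even (card B)} = k \<and> card {B\<in>blocks V S. odd (card B)} = card V - 2 * k)
         \<longleftrightarrow> S \<in> matchings E k"
proof -
  let ?P = "blocks V S"
  let ?Ev = "{B\<in>?P. even (card B)}" and ?Od = "{B\<in>?P. odd (card B)}"
  have fP: "finite ?P" using finite_blocks[OF fV] .
  have pos: "card B > 0" if "B \<in> ?P" for B using block_props[OF fV that] by simp
  have tot: "card V = sum card ?Ev + sum card ?Od"
    using sum_card_blocks[OF fV, of S] sum_split_filter[OF fP, of card "\<lambda>B. even (card B)"] by simp
  show ?thesis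
  proof
    assume h: "card ?Ev = k \<and> card ?Od = card V - 2 * k"
    have e1: "sum card ?Ev = sum (\<lambda>B. card B - 2) ?Ev + 2 * card ?Ev"
    proof -
      have "sum card ?Ev = sum (\<lambda>B. (card B - 2) + 2) ?Ev"
      proof (rule sum.cong[OF refl])
        fix B assume "B \<in> ?Ev"
        then have "card B \<ge> 2" using pos[of B] by (auto elim!: evenE)
        then show "card B = card B - 2 + 2" by simp
      qed
      also have "\<dots> = sum (\<lambda>B. card B - 2) ?Ev + (\<Sum>B\<in>?Ev. 2)" by (rule sum.distrib)
      finally show ?thesis by simp
    qed
    have o1: "sum card ?Od = sum (\<lambda>B. card B - 1) ?Od + card ?Od"
    proof -
      have "sum card ?Od = sum (\<lambda>B. (card B - 1) + 1) ?Od"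
        by (rule sum.cong[OF refl]) (use pos in auto)
      also have "\<dots> = sum (\<lambda>B. card B - 1) ?Od + (\<Sum>B\<in>?Od. 1)" by (rule sum.distrib)
      finally show ?thesis by simp
    qed
    have z: "sum (\<lambda>B. card B - 2) ?Ev = 0 \<and> sum (\<lambda>B. card B - 1) ?Od = 0"
      using tot e1 o1 h k by linarith
    have le2: "card B \<le> 2" if "B \<in> ?P" for B
    proof (cases "even (card B)")
      case True then have "B \<in> ?Ev" using that by simp
      then show ?thesis using z fP by (simp add: sum_eq_0_iff)
    next
      case False then have "B \<in> ?Od" using that by simp
      then show ?thesis using z fP proof -
        have "card B \<le> 1" using z fP \<open>B \<in> ?Od\<close> by (simp add: sum_eq_0_iff)
        then show ?thesis by simp
      qed
    qed
    have Sb: "S = {B \<in> ?P. card B = 2}" and pd: "pairwise disjnt S" using G1[OF eS fV le2] by auto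
    have c12: "card B = 1 \<or> card B = 2" if "B \<in> ?P" for B using le2[OF that] pos[OF that] by linarith
    have "?Ev = {B \<in> ?P. card B = 2}" using c12 by fastforce
    then have "card S = k" using Sb h by simp
    then show "S \<in> matchings E k" using SE pd by (simp add: matchings_def)
  next
    assume "S \<in> matchings E k"
    then have pd: "pairwise disjnt S" and cS: "card S = k" by (auto simp: matchings_def)
    have le2: "card B \<le> 2" if "B \<in> ?P" for B using G2[OF eS fV pd that] .
    have Sb: "S = {B \<in> ?P. card B = 2}" using G1[OF eS fV le2] by auto
    have c12: "card B = 1 \<or> card B = 2" if "B \<in> ?P" for B using le2[OF that] pos[OF that] by linarith
    have "?Ev = {B \<in> ?P. card B = 2}" using c12 by fastforce
    then have Ev: "?Ev = S" using Sb by simp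
    have Od: "?Od = {B \<in> ?P. card B = 1}" using c12 by fastforce
    have "sum card S = sum (\<lambda>_. 2) S" using Sb by (intro sum.cong) auto
    then have "sum card ?Ev = 2 * k" using Ev cS by simp
    moreover have "sum card ?Od = card ?Od" using Od by simp
    ultimately show "card ?Ev = k \<and> card ?Od = card V - 2 * k" using tot Ev cS by simp
  qed
qed



lemma size_filter_image:
  "finite A \<Longrightarrow> size (filter_mset Q (image_mset f (mset_set A))) = card {a\<in>A. Q (f a)}"
proof (induction A rule: finite_induct)
  case empty then show ?case by simp
next
  case (insert a A)
  have "{b \<in> insert a A. Q (f b)} = (if Q (f a) then insert a {b\<in>A. Q (f b)} else {b\<in>A. Q (f b)})"
    by auto
  then show ?case using insert by auto
qed

lemma evn_lam: "finite V \<Longrightarrow> evn (lam V S) = card {B\<in>blocks V S. even (card B)}"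
proof -
  assume fV: "finite V"
  let ?M = "image_mset card (mset_set (blocks V S))"
  have "evn (lam V S) = length (filter even (sorted_list_of_multiset ?M))"
    by (simp add: evn_def lam_def rev_filter[symmetric])
  also have "\<dots> = size (filter_mset even (mset (sorted_list_of_multiset ?M)))"
    by (metis mset_filter size_mset)
  also have "\<dots> = card {B\<in>blocks V S. even (card B)}"
    using size_filter_image[OF finite_blocks[OF fV]] by simp
  finally show ?thesis .
qed

lemma odn_lam: "finite V \<Longrightarrow> odn (lam V S) = card {B\<in>blocks V S. odd (card B)}"
proof -
  assume fV: "finite V"
  let ?M = "image_mset card (mset_set (blocks V S))"
  have "odn (lam V S) = length (filter odd (sorted_list_of_multiset ?M))"
    by (simp add: odn_def lam_def rev_filter[symmetric])
  also have "\<dots> = size (filter_mset odd (mset (sorted_list_of_multiset ?M)))"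
    by (metis mset_filter size_mset)
  also have "\<dots> = card {B\<in>blocks V S. odd (card B)}"
    using size_filter_image[OF finite_blocks[OF fV]] by simp
  finally show ?thesis .
qed

definition xAB :: "nat \<Rightarrow> nat \<Rightarrow> nat \<Rightarrow> real" where
  "xAB A B i = (if i < A then 1 else if i < A + B then -1 else 0)"

lemma supp_AB: "{i. xAB A B i \<noteq> 0} = {..<A+B}"
  by (auto simp: xAB_def)

lemma ps_AB: "power_sum m (xAB A B) = (if even m then real A + real B else real A - real B)"
proof -
  have "power_sum m (xAB A B) = (\<Sum>i\<in>{0..<A+B}. xAB A B i ^ m)"
    by (simp add: power_sum_def supp_AB atLeast0LessThan)
  also have "\<dots> = (\<Sum>i\<in>{0..<A}. xAB A B i ^ m) + (\<Sum>i\<in>{A..<A+B}. xAB A B i ^ m)"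
    by (rule sum.atLeastLessThan_concat[symmetric]) auto
  also have "(\<Sum>i\<in>{0..<A}. xAB A B i ^ m) = real A" by (simp add: xAB_def)
  also have "(\<Sum>i\<in>{A..<A+B}. xAB A B i ^ m) = (\<Sum>i\<in>{A..<A+B}. (-1) ^ m)"
    by (intro sum.cong) (auto simp: xAB_def)
  finally show ?thesis by simp
qed

lemma ppart_AB: "power_sum_part l (xAB A B) = (real A + real B) ^ evn l * (real A - real B) ^ odn l"
  by (induction l) (auto simp: power_sum_part_def evn_def odn_def ps_AB)

theorem main_thm:
  fixes V :: "'a set" and E :: "'a set set"
  assumes sg: "simple_graph V E"
  shows "(\<exists>c. p_expansion V E c) \<and>
    (\<forall>c. p_expansion V E c \<longrightarrow>
       (\<forall>k. 2 * k \<le> card V \<longrightarrow>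
          c (two_one_part k (card V)) = (-1) ^ k * real (card (matchings E k))))"
proof -
  let ?n = "card V"
  let ?T = "partitions ?n"
  have fV: "finite V" and eE: "edges_in V E" using sg by (auto simp: simple_graph_def edges_in_def)
  have EP: "E \<subseteq> Pow V" using eE by (auto simp: edges_in_def)
  have fE: "finite E" using finite_subset[OF EP] fV by simp
  have eS: "edges_in V S" if "S \<in> Pow E" for S using eE that by (auto simp: edges_in_def)
  have fT: "finite ?T" by (rule finite_partitions)
  define c0 where "c0 l = (\<Sum>S\<in>{S. S \<in> Pow E \<and> lam V S = l}. (-1) ^ card S :: real)" for l
  have exp0: "p_expansion V E c0"
    unfolding p_expansion_def
  proof (intro allI impI)
    fix x :: "nat \<Rightarrow> real" assume fC: "finite {i. x i \<noteq> 0}"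
    have "chrom_sym_eval V E x = (\<Sum>S\<in>Pow E. (-1) ^ card S * power_sum_part (lam V S) x)"
      using incl_excl[OF fV fE eE fC] KS[OF fV fC eS] ppart_lam[OF fV] by simp
    also have "\<dots> = (\<Sum>l\<in>?T. \<Sum>S\<in>{S. S \<in> Pow E \<and> lam V S = l}. (-1) ^ card S * power_sum_part (lam V S) x)"
      by (rule sum.group[symmetric]) (use fE fT lam_part[OF fV] in auto)
    also have "\<dots> = (\<Sum>l\<in>?T. c0 l * power_sum_part l x)"
      unfolding c0_def by (intro sum.cong refl) (auto simp: sum_distrib_right)
    finally show "chrom_sym_eval V E x = (\<Sum>l\<in>?T. c0 l * power_sum_part l x)" .
  qed
  have c0val: "c0 (two_one_part k ?n) = (-1) ^ k * real (card (matchings E k))" if k: "2 * k \<le> ?n" for k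
  proof -
    have "{S. S \<in> Pow E \<and> lam V S = two_one_part k ?n} = matchings E k"
    proof (intro set_eqI iffI)
      fix S assume S: "S \<in> {S. S \<in> Pow E \<and> lam V S = two_one_part k ?n}"
      then have "evn (lam V S) = k" "odn (lam V S) = ?n - 2 * k" using two_one_props[OF k] by auto
      then have SE: "S \<in> Pow E" and ev: "card {B\<in>blocks V S. even (card B)} = k"
        and od: "card {B\<in>blocks V S. odd (card B)} = ?n - 2 * k"
        using S evn_lam[OF fV, of S] odn_lam[OF fV, of S] by auto
      have "S \<subseteq> E" using SE by auto
      from match_iff[OF eS[OF SE] fV this k] ev od show "S \<in> matchings E k" by blast
    next
      fix S assume S: "S \<in> matchings E k"
      then have SE: "S \<in> Pow E" by (auto simp: matchings_def)
      have "S \<subseteq> E" using SE by auto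
      from match_iff[OF eS[OF SE] fV this k] S
      have "card {B\<in>blocks V S. even (card B)} = k \<and> card {B\<in>blocks V S. odd (card B)} = ?n - 2 * k"
        by blast
      then have "evn (lam V S) = k" "odn (lam V S) = ?n - 2 * k"
        using evn_lam[OF fV, of S] odn_lam[OF fV, of S] by auto
      then have "lam V S = two_one_part k ?n" using unique_class[OF lam_part[OF fV] k] by simp
      then show "S \<in> {S. S \<in> Pow E \<and> lam V S = two_one_part k ?n}" using SE by simp
    qed
    then have "c0 (two_one_part k ?n) = (\<Sum>S\<in>matchings E k. (-1) ^ card S :: real)"
      by (simp add: c0_def)
    also have "\<dots> = (\<Sum>S\<in>matchings E k. (-1) ^ k :: real)"
      by (intro sum.cong) (auto simp: matchings_def)
    finally show ?thesis by simp
  qed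
  have uniq: "c (two_one_part k ?n) = c0 (two_one_part k ?n)"
    if pc: "p_expansion V E c" and k: "2 * k \<le> ?n" for c k
  proof -
    define d where "d l = c l - c0 l" for l
    define D where "D e q = (\<Sum>l\<in>{l. l \<in> ?T \<and> (evn l, odn l) = (e, q)}. d l)" for e q
    have "(\<Sum>e\<le>?n. \<Sum>q\<le>?n. D e q * (real A + real B) ^ e * (real A - real B) ^ q) = 0" for A B
    proof -
      have fC: "finite {i. xAB A B i \<noteq> 0}" by (simp add: supp_AB)
      have "(\<Sum>l\<in>?T. d l * power_sum_part l (xAB A B)) = 0"
        using pc exp0 fC unfolding p_expansion_def d_def
        by (simp add: left_diff_distrib sum_subtractf)
      then have "(\<Sum>l\<in>?T. d l * (real A + real B) ^ evn l * (real A - real B) ^ odn l) = 0"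
        by (simp add: ppart_AB mult.assoc)
      moreover have "(\<Sum>l\<in>?T. d l * (real A + real B) ^ evn l * (real A - real B) ^ odn l)
          = (\<Sum>p\<in>{..?n} \<times> {..?n}. \<Sum>l\<in>{l. l \<in> ?T \<and> (evn l, odn l) = p}.
                d l * (real A + real B) ^ evn l * (real A - real B) ^ odn l)"
        by (rule sum.group[symmetric]) (use fT evn_odn_le in auto)
      moreover have "\<dots> = (\<Sum>p\<in>{..?n} \<times> {..?n}. D (fst p) (snd p) * (real A + real B) ^ fst p * (real A - real B) ^ snd p)"
        unfolding D_def by (intro sum.cong refl) (auto simp: sum_distrib_right)
      moreover have "\<dots> = (\<Sum>e\<le>?n. \<Sum>q\<le>?n. D e q * (real A + real B) ^ e * (real A - real B) ^ q)"
        by (simp add: sum.cartesian_product split_def)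
      ultimately show ?thesis by simp
    qed
    then have "D k (?n - 2 * k) = 0" using two_var[where n="?n" and D=D, of k "?n - 2 * k"] k by simp
    moreover have "{l. l \<in> ?T \<and> (evn l, odn l) = (k, ?n - 2 * k)} = {two_one_part k ?n}"
    proof (intro set_eqI iffI)
      fix l assume "l \<in> {l. l \<in> ?T \<and> (evn l, odn l) = (k, ?n - 2 * k)}"
      then have "l \<in> ?T" "evn l = k" "odn l = ?n - 2 * k" by auto
      then show "l \<in> {two_one_part k ?n}" using unique_class[OF _ k] by blast
    next
      fix l assume "l \<in> {two_one_part k ?n}"
      then show "l \<in> {l. l \<in> ?T \<and> (evn l, odn l) = (k, ?n - 2 * k)}"
        using two_one_props[OF k] by simp
    qed
    ultimately have "d (two_one_part k ?n) = 0" unfolding D_def by simp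
    then show ?thesis by (simp add: d_def)
  qed
  show ?thesis
  proof (intro conjI allI impI)
    show "\<exists>c. p_expansion V E c" using exp0 by blast
  next
    fix c k assume "p_expansion V E c" "2 * k \<le> ?n"
    then show "c (two_one_part k ?n) = (-1) ^ k * real (card (matchings E k))"
      using uniq c0val by simp
  qed
qed



lemma matchings_empty:
  assumes sg: "simple_graph V E" and k: "card E < k \<or> card V < 2 * k"
  shows "matchings E k = {}"
proof (rule ccontr)
  assume "matchings E k \<noteq> {}"
  then obtain M where M: "M \<subseteq> E" "card M = k" "pairwise disjnt M" by (auto simp: matchings_def)
  have fV: "finite V" and eE: "edges_in V E" using sg by (auto simp: simple_graph_def edges_in_def)
  have EP: "E \<subseteq> Pow V" using eE by (auto simp: edges_in_def)
  have fE: "finite E" using finite_subset[OF EP] fV by simp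
  have "card M \<le> card E" using card_mono[OF fE M(1)] .
  moreover have "2 * k \<le> card V"
  proof -
    have c2: "card e = 2" "finite e" if "e \<in> M" for e using edge_two[OF eE] M(1) that by auto
    have "card (\<Union>M) = sum card M" by (rule card_Union_disjoint[OF M(3)]) (use c2 in auto)
    also have "\<dots> = 2 * k" using c2 M(2) by simp
    finally have "card (\<Union>M) = 2 * k" .
    moreover have "\<Union>M \<subseteq> V" using M(1) EP by auto
    ultimately show ?thesis using card_mono[OF fV] by metis
  qed
  ultimately show False using k M(2) by linarith
qed

theorem theorem1:
  fixes V :: "'a set" and E :: "'a set set"
  assumes "forest V E"
  shows "(\<exists>c. p_expansion V E c) \<and>
    (\<forall>c. p_expansion V E c \<longrightarrow>
       (\<forall>k. 2 * k \<le> card V \<longrightarrow>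
          c (two_one_part k (card V)) = (-1) ^ k * real (card (matchings E k))) \<and>
       matching_poly E = (\<Sum>k \<le> card V div 2. monom \<bar>c (two_one_part k (card V))\<bar> k))"
proof -
  have sg: "simple_graph V E" using assms by (simp add: forest_def)
  note M = main_thm[OF sg]
  show ?thesis
  proof (intro conjI allI impI)
    show "\<exists>c. p_expansion V E c" using M by blast
  next
    fix c k assume "p_expansion V E c" "2 * k \<le> card V"
    then show "c (two_one_part k (card V)) = (-1) ^ k * real (card (matchings E k))" using M by blast
  next
    fix c assume pc: "p_expansion V E c"
    let ?m = "\<lambda>k. monom (real (card (matchings E k))) k"
    let ?N = "card E + card V"
    have "(\<Sum>k \<le> card V div 2. monom \<bar>c (two_one_part k (card V))\<bar> k) = (\<Sum>k \<le> card V div 2. ?m k)"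
    proof (intro sum.cong refl)
      fix k assume "k \<in> {..card V div 2}"
      then have "2 * k \<le> card V" by auto
      then have "c (two_one_part k (card V)) = (-1) ^ k * real (card (matchings E k))" using M pc by blast
      then show "monom \<bar>c (two_one_part k (card V))\<bar> k = ?m k" by (simp add: abs_mult)
    qed
    also have "\<dots> = (\<Sum>k \<le> ?N. ?m k)"
    proof (rule sum.mono_neutral_left)
      show "\<forall>i\<in>{..?N} - {..card V div 2}. ?m i = 0"
      proof
        fix i assume "i \<in> {..?N} - {..card V div 2}"
        then have "card V < 2 * i" by auto
        then show "?m i = 0" using matchings_empty[OF sg, of i] by simp
      qed
    qed auto
    also have "\<dots> = (\<Sum>k \<le> card E. ?m k)"
      by (rule sum.mono_neutral_right) (use matchings_empty[OF sg] in auto)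
    finally show "matching_poly E = (\<Sum>k \<le> card V div 2. monom \<bar>c (two_one_part k (card V))\<bar> k)"
      by (simp add: matching_poly_def)
  qed
qed

end
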